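(* Let $n\geq 5$, let $5\leq s\leq n$, and let $\alpha_2,\dots,\alpha_n\in\mathbb{C}$ with $\alpha_2=\cdots=\alpha_{s-1}=0$ and $\alpha_s\neq0$. Then the transposed Poisson algebra $\mathbf{TP}(\alpha_2,\dots,\alpha_n)$ is isomorphic to $\mathbf{TP}(\alpha_2',\dots,\alpha_n')$ where $\alpha_s'=1$, $\alpha_{2s-3}'=\alpha$ for some $\alpha\in\mathbb{C}$ (this entry present only when $2s-3\leq n$), and all other $\alpha_i'=0$.
   Context: $\mu_0^n$ is the complex commutative associative algebra with basis $\{e_1,\dots,e_n\}$ and $e_i\cdot e_j=e_{i+j}$ for $2\leq i+j\leq n$, other products zero. For $\alpha_2,\dots,\alpha_n\in\mathbb{C}$, $\mathbf{TP}(\alpha_2,\dots,\alpha_n)$ denotes $\mu_0^n$ with its associative product together with the bracket $[e_i,e_j]=(j-i)\sum_{t=i+j-1}^{n}\alpha_{t-i-j+3}e_t$ for $3\leq i+j\leq n+1$, other brackets of basis elements zero. Isomorphisms preserve both operations. *)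

theory Defs
  imports Main "HOL.Complex"
begin

text \<open>Elements of the n-dimensional algebra with basis e_1,...,e_n are represented as
coefficient functions x :: nat => complex supported on {1..n}; e_i is the function
that is 1 at i and 0 elsewhere.\<close>

definition vecs :: "nat \<Rightarrow> (nat \<Rightarrow> complex) set" where
  "vecs n = {x. \<forall>t. t \<notin> {1..n} \<longrightarrow> x t = 0}"

definition mu0_mult :: "nat \<Rightarrow> (nat \<Rightarrow> complex) \<Rightarrow> (nat \<Rightarrow> complex) \<Rightarrow> (nat \<Rightarrow> complex)" where
  "mu0_mult n x y = (\<lambda>t. \<Sum>i\<in>{1..n}. \<Sum>j\<in>{1..n}.
      (if i + j = t \<and> t \<le> n then x i * y j else 0))"

text \<open>Structure constant of the bracket of TP(alpha): coefficient of e_t in [e_i,e_j].\<close>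
definition tp_const :: "nat \<Rightarrow> (nat \<Rightarrow> complex) \<Rightarrow> nat \<Rightarrow> nat \<Rightarrow> nat \<Rightarrow> complex" where
  "tp_const n \<alpha> i j t =
     (if 3 \<le> i + j \<and> i + j \<le> n + 1 \<and> i + j - 1 \<le> t \<and> t \<le> n
      then (of_int (int j - int i)) * \<alpha> (t + 3 - (i + j)) else 0)"

definition tp_bracket :: "nat \<Rightarrow> (nat \<Rightarrow> complex) \<Rightarrow> (nat \<Rightarrow> complex) \<Rightarrow> (nat \<Rightarrow> complex) \<Rightarrow> (nat \<Rightarrow> complex)" where
  "tp_bracket n \<alpha> x y = (\<lambda>t. \<Sum>i\<in>{1..n}. \<Sum>j\<in>{1..n}. x i * y j * tp_const n \<alpha> i j t)"

definition tp_isomorphic :: "nat \<Rightarrow> (nat \<Rightarrow> complex) \<Rightarrow> (nat \<Rightarrow> complex) \<Rightarrow> bool" where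
  "tp_isomorphic n \<alpha> \<beta> \<longleftrightarrow> (\<exists>f.
     bij_betw f (vecs n) (vecs n) \<and>
     (\<forall>x\<in>vecs n. \<forall>y\<in>vecs n. f (\<lambda>t. x t + y t) = (\<lambda>t. f x t + f y t)) \<and>
     (\<forall>c. \<forall>x\<in>vecs n. f (\<lambda>t. c * x t) = (\<lambda>t. c * f x t)) \<and>
     (\<forall>x\<in>vecs n. \<forall>y\<in>vecs n. f (mu0_mult n x y) = mu0_mult n (f x) (f y)) \<and>
     (\<forall>x\<in>vecs n. \<forall>y\<in>vecs n. f (tp_bracket n \<alpha> x y) = tp_bracket n \<beta> (f x) (f y)))"

end

theory Submission
  imports Defs "HOL-Computational_Algebra.Formal_Power_Series"
begin


definition eqm :: "nat \<Rightarrow> complex fps \<Rightarrow> complex fps \<Rightarrow> bool" where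
  "eqm N A B \<longleftrightarrow> (\<forall>i<N. fps_nth A i = fps_nth B i)"

lemma eqm_iff: "eqm N A B \<longleftrightarrow> (\<exists>C. A = B + fps_X ^ N * C)"
proof
  assume h: "eqm N A B"
  have "A = B + fps_X ^ N * fps_shift N (A - B)"
    using h by (intro fps_ext) (auto simp: eqm_def fps_X_power_mult_nth)
  then show "\<exists>C. A = B + fps_X ^ N * C" by blast
next
  assume "\<exists>C. A = B + fps_X ^ N * C"
  then obtain C where "A = B + fps_X ^ N * C" by blast
  then show "eqm N A B" by (auto simp: eqm_def fps_X_power_mult_nth)
qed

lemma eqmI: "A = B + fps_X ^ N * C \<Longrightarrow> eqm N A B"
  using eqm_iff by blast

lemma eqm_refl[simp]: "eqm N A A" by (simp add: eqm_def)
lemma eqm_sym: "eqm N A B \<Longrightarrow> eqm N B A" by (simp add: eqm_def)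
lemma eqm_trans: "eqm N A B \<Longrightarrow> eqm N B C \<Longrightarrow> eqm N A C" by (simp add: eqm_def)
lemmas [trans] = eqm_trans
lemma eqm_mono: "eqm N A B \<Longrightarrow> M \<le> N \<Longrightarrow> eqm M A B" by (simp add: eqm_def)

lemma eqm_add: "eqm N A B \<Longrightarrow> eqm N C D \<Longrightarrow> eqm N (A + C) (B + D)"
  by (simp add: eqm_def)
lemma eqm_diff: "eqm N A B \<Longrightarrow> eqm N C D \<Longrightarrow> eqm N (A - C) (B - D)"
  by (simp add: eqm_def)
lemma eqm_mult: "eqm N A B \<Longrightarrow> eqm N C D \<Longrightarrow> eqm N (A * C) (B * D)"
proof -
  assume "eqm N A B" "eqm N C D"
  then obtain E F where e: "A = B + fps_X ^ N * E" and f: "C = D + fps_X ^ N * F"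
    by (auto simp: eqm_iff)
  have "A * C = B * D + fps_X ^ N * (E * D + B * F + fps_X ^ N * E * F)"
    unfolding e f by (simp add: algebra_simps)
  then show ?thesis by (rule eqmI)
qed

lemma eqm_Xpow_zero: "N \<le> j \<Longrightarrow> eqm N (fps_X ^ j * Z) 0"
  by (auto simp: eqm_def fps_X_power_mult_nth)

lemma eqm_Xpow_zero': "N \<le> j \<Longrightarrow> eqm N (c * fps_X ^ j * Z) 0"
  by (auto simp: eqm_def fps_X_power_mult_nth mult.commute[of c] mult.assoc)

lemma X_factor: fixes P :: "complex fps" shows "fps_nth P 0 = 0 \<Longrightarrow> P = fps_X * fps_shift 1 P"
  by (intro fps_ext) (auto simp: fps_X_mult_nth)

lemma eqm_compose: assumes "eqm N A B" "fps_nth P 0 = 0" shows "eqm N (A oo P) (B oo P)"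
proof -
  obtain C where c: "A = B + fps_X ^ N * C" using assms by (auto simp: eqm_iff)
  have "A oo P = (B oo P) + P ^ N * (C oo P)"
    unfolding c using assms(2)
    by (simp add: fps_compose_add_distrib fps_compose_mult_distrib fps_X_power_compose)
  also have "P ^ N = fps_X ^ N * fps_shift 1 P ^ N"
  proof -
    define Q where "Q = fps_shift 1 P"
    have e: "P = fps_X * Q" unfolding Q_def by (rule X_factor[OF assms(2)])
    show ?thesis unfolding e[symmetric] Q_def[symmetric] by (subst e) (simp add: power_mult_distrib)
  qed
  finally show ?thesis by (intro eqmI) (simp add: mult.assoc)
qed

definition toF :: "(nat \<Rightarrow> complex) \<Rightarrow> complex fps" where "toF x = Abs_fps x"
definition fromF :: "nat \<Rightarrow> complex fps \<Rightarrow> (nat \<Rightarrow> complex)" where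
  "fromF n A = (\<lambda>t. if t \<in> {1..n} then fps_nth A t else 0)"
definition hser :: "(nat \<Rightarrow> complex) \<Rightarrow> complex fps" where "hser \<alpha> = Abs_fps (\<lambda>i. \<alpha> (i+2))"
definition brk :: "complex fps \<Rightarrow> complex fps \<Rightarrow> complex fps \<Rightarrow> complex fps" where
  "brk H A B = (A * fps_deriv B - fps_deriv A * B) * H"

lemma vecs_fromF: "fromF n A \<in> vecs n" by (simp add: vecs_def fromF_def)
lemma fromF_toF: "x \<in> vecs n \<Longrightarrow> fromF n (toF x) = x"
  by (auto simp: vecs_def fromF_def toF_def fun_eq_iff)
lemma toF_0: "x \<in> vecs n \<Longrightarrow> fps_nth (toF x) 0 = 0"
  by (auto simp: vecs_def toF_def)
lemma toF_fromF: "fps_nth A 0 = 0 \<Longrightarrow> eqm (Suc n) (toF (fromF n A)) A"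
  by (auto simp: eqm_def toF_def fromF_def Suc_le_eq)
lemma fromF_eqm: "eqm (Suc n) A B \<Longrightarrow> fromF n A = fromF n B"
  by (auto simp: eqm_def fromF_def fun_eq_iff)
lemma toF_add: "toF (\<lambda>t. x t + y t) = toF x + toF y"
  by (intro fps_ext) (simp add: toF_def)
lemma toF_smult: "toF (\<lambda>t. c * x t) = fps_const c * toF x"
  by (intro fps_ext) (simp add: toF_def)
lemma fromF_add: "fromF n (A + B) = (\<lambda>t. fromF n A t + fromF n B t)"
  by (auto simp: fromF_def)
lemma fromF_smult: "fromF n (fps_const c * A) = (\<lambda>t. c * fromF n A t)"
  by (auto simp: fromF_def)

lemma toF_sum: assumes "x \<in> vecs n"
  shows "toF x = (\<Sum>i\<in>{1..n}. fps_const (x i) * fps_X ^ i)"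
proof (intro fps_ext)
  fix t
  have "fps_nth (\<Sum>i\<in>{1..n}. fps_const (x i) * fps_X ^ i) t = (\<Sum>i\<in>{1..n}. if t = i then x i else 0)"
    unfolding fps_sum_nth by (intro sum.cong) auto
  also have "\<dots> = (if t \<in> {1..n} then x t else 0)"
    by (rule sum.delta') simp
  also have "\<dots> = x t" using assms by (auto simp: vecs_def)
  finally show "fps_nth (toF x) t = fps_nth (\<Sum>i\<in>{1..n}. fps_const (x i) * fps_X ^ i) t"
    by (simp add: toF_def)
qed

lemma mu0_vecs: "mu0_mult n x y \<in> vecs n"
  by (auto simp: vecs_def mu0_mult_def intro!: sum.neutral)

lemma mu0_toF: assumes "x \<in> vecs n" "y \<in> vecs n"
  shows "eqm (Suc n) (toF (mu0_mult n x y)) (toF x * toF y)"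
proof -
  have "toF x * toF y = (\<Sum>i\<in>{1..n}. \<Sum>j\<in>{1..n}. fps_const (x i * y j) * fps_X ^ (i + j))"
    unfolding toF_sum[OF assms(1)] toF_sum[OF assms(2)] sum_product
    by (intro sum.cong refl) (simp add: power_add algebra_simps)
  then show ?thesis
    by (auto simp: eqm_def fps_sum_nth toF_def mu0_mult_def intro!: sum.cong)
qed

lemma brk_sum: "brk H (sum f I) (sum g J) = (\<Sum>i\<in>I. \<Sum>j\<in>J. brk H (f i) (g j))"
proof -
  have 1: "sum f I * fps_deriv (sum g J) = (\<Sum>i\<in>I. \<Sum>j\<in>J. f i * fps_deriv (g j))"
    by (simp add: fps_deriv_sum sum_product)
  have 2: "fps_deriv (sum f I) * sum g J = (\<Sum>i\<in>I. \<Sum>j\<in>J. fps_deriv (f i) * g j)"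
    by (simp add: fps_deriv_sum sum_product)
  show ?thesis unfolding brk_def 1 2
    by (simp add: left_diff_distrib sum_distrib_right sum_subtractf)
qed

lemma deriv_monom: fixes b :: complex shows "fps_deriv (fps_const b * fps_X ^ Suc j) = fps_const (b * of_nat (Suc j)) * fps_X ^ j"
proof -
  have d: "fps_deriv (fps_X ^ Suc j :: complex fps) = fps_const (of_nat (Suc j)) * fps_X ^ j"
    using fps_deriv_power[of "fps_X::complex fps" "Suc j"] by (simp del: power_Suc of_nat_Suc)
  show ?thesis by (simp only: fps_deriv_mult_const_left d mult.assoc[symmetric] fps_const_mult)
qed

lemma cXcX: fixes c d :: complex
  shows "fps_const c * fps_X ^ m * (fps_const d * fps_X ^ k) = fps_const (c * d) * fps_X ^ (m + k)"
proof -
  have e: "fps_X ^ m * (fps_const d * fps_X ^ k) = fps_const d * (fps_X ^ m * (fps_X ^ k :: complex fps))"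
    by (rule mult.left_commute)
  show ?thesis by (simp only: mult.assoc e power_add fps_const_mult[symmetric])
qed

lemma brk_monom: assumes "1 \<le> i" "1 \<le> j"
  shows "brk H (fps_const a * fps_X ^ i) (fps_const b * fps_X ^ j) =
    fps_const (a * b * (of_nat j - of_nat i)) * (fps_X ^ (i + j - 1) * H)"
proof -
  obtain i' j' where ij: "i = Suc i'" "j = Suc j'" using assms by (metis Suc_le_D One_nat_def)
  have "brk H (fps_const a * fps_X ^ i) (fps_const b * fps_X ^ j) =
     (fps_const a * fps_X ^ Suc i' * (fps_const (b * of_nat (Suc j')) * fps_X ^ j')
      - fps_const (a * of_nat (Suc i')) * fps_X ^ i' * (fps_const b * fps_X ^ Suc j')) * H"
    unfolding brk_def ij deriv_monom by simp
  also have "\<dots> = (fps_const (a * (b * of_nat (Suc j'))) * fps_X ^ (i' + j' + 1)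
      - fps_const (a * of_nat (Suc i') * b) * fps_X ^ (i' + j' + 1)) * H"
    by (simp only: cXcX) simp
  also have "\<dots> = fps_const (a * (b * of_nat (Suc j')) - a * of_nat (Suc i') * b) * (fps_X ^ (i' + j' + 1) * H)"
    by (simp only: fps_const_sub[symmetric] left_diff_distrib mult.assoc)
  also have "a * (b * of_nat (Suc j')) - a * of_nat (Suc i') * b = a * b * (of_nat j - of_nat i)"
    by (simp add: ij algebra_simps)
  finally show ?thesis by (simp add: ij)
qed

lemma nth_cXH: "fps_nth (fps_const c * (fps_X ^ k * H)) t = c * (if t < k then 0 else fps_nth H (t - k))"
  by (simp add: fps_X_power_mult_nth)

lemma tp_term: assumes "i \<in> {1..n}" "j \<in> {1..n}" "t \<le> n"
  shows "a * b * tp_const n \<alpha> i j t =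
    fps_nth (brk (hser \<alpha>) (fps_const a * fps_X ^ i) (fps_const b * fps_X ^ j)) t"
proof -
  have "fps_nth (brk (hser \<alpha>) (fps_const a * fps_X ^ i) (fps_const b * fps_X ^ j)) t
     = a * b * (of_nat j - of_nat i) * (if t < i + j - 1 then 0 else \<alpha> (t - (i + j - 1) + 2))"
  proof -
    have "1 \<le> i" "1 \<le> j" using assms by auto
    then have "fps_nth (brk (hser \<alpha>) (fps_const a * fps_X ^ i) (fps_const b * fps_X ^ j)) t
     = a * b * (of_nat j - of_nat i) * (if t < i + j - 1 then 0 else fps_nth (hser \<alpha>) (t - (i + j - 1)))"
      by (simp only: brk_monom nth_cXH)
    then show ?thesis by (simp add: hser_def)
  qed
  also have "\<dots> = a * b * tp_const n \<alpha> i j t"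
  proof (cases "i = 1 \<and> j = 1")
    case True then show ?thesis by (simp add: tp_const_def)
  next
    case False
    then have "3 \<le> i + j" using assms by auto
    moreover have "t + 3 - (i + j) = t - (i + j - 1) + 2" if "i + j - 1 \<le> t" using that \<open>3 \<le> i + j\<close> by simp
    ultimately show ?thesis using assms by (auto simp: tp_const_def of_int_diff)
  qed
  finally show ?thesis by simp
qed

lemma tpb_vecs: "tp_bracket n \<alpha> x y \<in> vecs n"
  by (auto simp: vecs_def tp_bracket_def tp_const_def intro!: sum.neutral)

lemma tpb_toF: assumes "x \<in> vecs n" "y \<in> vecs n"
  shows "eqm (Suc n) (toF (tp_bracket n \<alpha> x y)) (brk (hser \<alpha>) (toF x) (toF y))"
  unfolding eqm_def
proof (intro allI impI)
  fix t assume "t < Suc n"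
  then have t: "t \<le> n" by simp
  have "fps_nth (brk (hser \<alpha>) (toF x) (toF y)) t = (\<Sum>i\<in>{1..n}. \<Sum>j\<in>{1..n}.
      fps_nth (brk (hser \<alpha>) (fps_const (x i) * fps_X ^ i) (fps_const (y j) * fps_X ^ j)) t)"
    unfolding toF_sum[OF assms(1)] toF_sum[OF assms(2)] brk_sum by (simp add: fps_sum_nth)
  also have "\<dots> = (\<Sum>i\<in>{1..n}. \<Sum>j\<in>{1..n}. x i * y j * tp_const n \<alpha> i j t)"
    using t by (intro sum.cong refl) (simp add: tp_term)
  finally show "fps_nth (toF (tp_bracket n \<alpha> x y)) t = fps_nth (brk (hser \<alpha>) (toF x) (toF y)) t"
    by (simp add: toF_def tp_bracket_def)
qed

lemma deriv_XpowC: "fps_deriv (fps_X ^ Suc N * C :: complex fps) =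
    fps_X ^ N * (fps_const (of_nat (Suc N)) * C + fps_X * fps_deriv C)"
proof -
  have d: "fps_deriv (fps_X ^ Suc N :: complex fps) = fps_const (of_nat (Suc N)) * fps_X ^ N"
    using fps_deriv_power[of "fps_X::complex fps" "Suc N"] by (simp del: power_Suc of_nat_Suc)
  show ?thesis by (simp only: fps_deriv_mult d) (simp add: algebra_simps)
qed

lemma brk_zero1: assumes "fps_nth G 0 = 0"
  shows "eqm (Suc N) (brk H (fps_X ^ Suc N * C) G) 0"
proof -
  define g where "g = fps_shift 1 G"
  have G: "G = fps_X * g" unfolding g_def by (rule X_factor[OF assms])
  have "brk H (fps_X ^ Suc N * C) G = 0 + fps_X ^ Suc N *
      ((C * fps_deriv G - (fps_const (of_nat (Suc N)) * C + fps_X * fps_deriv C) * g) * H)"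
    unfolding brk_def deriv_XpowC by (subst (2) G) (simp add: algebra_simps)
  then show ?thesis by (rule eqmI)
qed

lemma brk_zero2: assumes "fps_nth G 0 = 0"
  shows "eqm (Suc N) (brk H G (fps_X ^ Suc N * C)) 0"
proof -
  have "brk H G (fps_X ^ Suc N * C) = - brk H (fps_X ^ Suc N * C) G"
    by (simp add: brk_def algebra_simps)
  with brk_zero1[OF assms, of N H C] show ?thesis by (simp add: eqm_def)
qed

lemma brk_add1: "brk H (A + B) C = brk H A C + brk H B C"
  by (simp add: brk_def algebra_simps)
lemma brk_add2: "brk H C (A + B) = brk H C A + brk H C B"
  by (simp add: brk_def algebra_simps)

lemma brk_cong: assumes "eqm (Suc N) A A2" "eqm (Suc N) B B2" "fps_nth A2 0 = 0" "fps_nth B2 0 = 0"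
  shows "eqm (Suc N) (brk H A B) (brk H A2 B2)"
proof -
  obtain C D where C: "A = A2 + fps_X ^ Suc N * C" and D: "B = B2 + fps_X ^ Suc N * D"
    using assms(1,2) by (auto simp: eqm_iff)
  have F0: "fps_nth (fps_X ^ Suc N * D) 0 = 0" by (simp add: fps_X_power_mult_nth)
  have "brk H A B = brk H A2 B2 + brk H A2 (fps_X ^ Suc N * D) + brk H (fps_X ^ Suc N * C) B2
     + brk H (fps_X ^ Suc N * C) (fps_X ^ Suc N * D)"
    unfolding C D brk_add1 brk_add2 by (simp add: algebra_simps)
  moreover have "eqm (Suc N) (brk H A2 B2 + brk H A2 (fps_X ^ Suc N * D) + brk H (fps_X ^ Suc N * C) B2
     + brk H (fps_X ^ Suc N * C) (fps_X ^ Suc N * D)) (brk H A2 B2 + 0 + 0 + 0)"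
    by (intro eqm_add eqm_refl brk_zero1 brk_zero2 assms F0)
  ultimately show ?thesis by simp
qed

lemma brk_compose: assumes P0: "fps_nth P 0 = 0" and HP: "H1 oo P = fps_deriv P * H2"
  shows "brk H1 A B oo P = brk H2 (A oo P) (B oo P)"
proof -
  have "brk H1 A B oo P = ((A oo P) * (fps_deriv B oo P) - (fps_deriv A oo P) * (B oo P)) * (H1 oo P)"
    by (simp add: brk_def fps_compose_mult_distrib[OF P0] fps_compose_sub_distrib)
  also have "\<dots> = brk H2 (A oo P) (B oo P)"
    unfolding brk_def HP fps_compose_deriv[OF P0] by (simp add: algebra_simps)
  finally show ?thesis .
qed

lemma fps_inv_0: "fps_nth (fps_inv P) 0 = 0"
  by (simp add: fps_inv_def)

theorem tp_iso_P:
  assumes P0: "fps_nth P 0 = 0" and P1: "fps_nth P 1 \<noteq> 0"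
    and HP: "hser \<alpha> oo P = fps_deriv P * hser \<beta>"
  shows "tp_isomorphic n \<alpha> \<beta>"
proof -
  define f where "f x = fromF n (toF x oo P)" for x
  define Q where "Q = fps_inv P"
  define g where "g y = fromF n (toF y oo Q)" for y
  have Q0: "fps_nth Q 0 = 0" unfolding Q_def by (rule fps_inv_0)
  have fv: "f x \<in> vecs n" for x unfolding f_def by (rule vecs_fromF)
  have gv: "g x \<in> vecs n" for x unfolding g_def by (rule vecs_fromF)
  have ftoF: "eqm (Suc n) (toF (f x)) (toF x oo P)" if "x \<in> vecs n" for x
    unfolding f_def using that by (intro toF_fromF) (simp add: toF_0)
  have gtoF: "eqm (Suc n) (toF (g x)) (toF x oo Q)" if "x \<in> vecs n" for x
    unfolding g_def using that by (intro toF_fromF) (simp add: toF_0)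
  have fg: "f (g y) = y" if "y \<in> vecs n" for y
  proof -
    have "eqm (Suc n) (toF (g y) oo P) ((toF y oo Q) oo P)"
      by (rule eqm_compose[OF gtoF[OF that] P0])
    also have "(toF y oo Q) oo P = toF y"
      using fps_compose_assoc[OF P0 Q0, of "toF y"] fps_inv[OF P0 P1] by (simp add: Q_def)
    finally have "f (g y) = fromF n (toF y)" unfolding f_def by (rule fromF_eqm)
    then show ?thesis using fromF_toF[OF that] by simp
  qed
  have gf: "g (f y) = y" if "y \<in> vecs n" for y
  proof -
    have "eqm (Suc n) (toF (f y) oo Q) ((toF y oo P) oo Q)"
      by (rule eqm_compose[OF ftoF[OF that] Q0])
    also have "(toF y oo P) oo Q = toF y"
      using fps_compose_assoc[OF Q0 P0, of "toF y"] fps_inv_right[OF P0 P1] by (simp add: Q_def)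
    finally have "g (f y) = fromF n (toF y)" unfolding g_def by (rule fromF_eqm)
    then show ?thesis using fromF_toF[OF that] by simp
  qed
  have bij: "bij_betw f (vecs n) (vecs n)"
    by (rule bij_betw_byWitness[where f'=g]) (use fg gf fv gv in auto)
  have add: "f (\<lambda>t. x t + y t) = (\<lambda>t. f x t + f y t)" for x y
    unfolding f_def toF_add fps_compose_add_distrib fromF_add ..
  have smult: "f (\<lambda>t. c * x t) = (\<lambda>t. c * f x t)" for c x
    unfolding f_def toF_smult fps_const_mult_apply_left[symmetric] fromF_smult ..
  have mu: "f (mu0_mult n x y) = mu0_mult n (f x) (f y)" if "x \<in> vecs n" "y \<in> vecs n" for x y
  proof -
    have "eqm (Suc n) (toF (mu0_mult n x y) oo P) ((toF x * toF y) oo P)"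
      by (rule eqm_compose[OF mu0_toF[OF that] P0])
    also have "(toF x * toF y) oo P = (toF x oo P) * (toF y oo P)"
      by (rule fps_compose_mult_distrib[OF P0])
    also have "eqm (Suc n) ((toF x oo P) * (toF y oo P)) (toF (f x) * toF (f y))"
      by (rule eqm_mult[OF eqm_sym[OF ftoF[OF that(1)]] eqm_sym[OF ftoF[OF that(2)]]])
    also have "eqm (Suc n) (toF (f x) * toF (f y)) (toF (mu0_mult n (f x) (f y)))"
      by (rule eqm_sym[OF mu0_toF[OF fv fv]])
    finally have "f (mu0_mult n x y) = fromF n (toF (mu0_mult n (f x) (f y)))"
      unfolding f_def by (rule fromF_eqm)
    then show ?thesis using fromF_toF[OF mu0_vecs] by simp
  qed
  have br: "f (tp_bracket n \<alpha> x y) = tp_bracket n \<beta> (f x) (f y)" if "x \<in> vecs n" "y \<in> vecs n" for x y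
  proof -
    have "eqm (Suc n) (toF (tp_bracket n \<alpha> x y) oo P) (brk (hser \<alpha>) (toF x) (toF y) oo P)"
      by (rule eqm_compose[OF tpb_toF[OF that] P0])
    also have "brk (hser \<alpha>) (toF x) (toF y) oo P = brk (hser \<beta>) (toF x oo P) (toF y oo P)"
      by (rule brk_compose[OF P0 HP])
    also have "eqm (Suc n) (brk (hser \<beta>) (toF x oo P) (toF y oo P)) (brk (hser \<beta>) (toF (f x)) (toF (f y)))"
      by (rule brk_cong[OF eqm_sym[OF ftoF[OF that(1)]] eqm_sym[OF ftoF[OF that(2)]] toF_0[OF fv] toF_0[OF fv]])
    also have "eqm (Suc n) (brk (hser \<beta>) (toF (f x)) (toF (f y))) (toF (tp_bracket n \<beta> (f x) (f y)))"
      by (rule eqm_sym[OF tpb_toF[OF fv fv]])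
    finally have "f (tp_bracket n \<alpha> x y) = fromF n (toF (tp_bracket n \<beta> (f x) (f y)))"
      unfolding f_def by (rule fromF_eqm)
    then show ?thesis using fromF_toF[OF tpb_vecs] by simp
  qed
  show ?thesis unfolding tp_isomorphic_def
    by (rule exI[of _ f]) (intro conjI ballI allI bij add smult mu br; assumption)
qed



lemma pow_1Y: "\<exists>Z. (1 + Y) ^ j = 1 + of_nat j * Y + Y ^ 2 * (Z :: complex fps)"
proof (induction j)
  case 0 show ?case by (rule exI[of _ 0]) simp
next
  case (Suc j)
  then obtain Z where Z: "(1 + Y) ^ j = 1 + of_nat j * Y + Y ^ 2 * Z" by blast
  have "(1 + Y) ^ Suc j = 1 + of_nat (Suc j) * Y + Y ^ 2 * (of_nat j + Z + Y * Z)"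
    by (simp add: Z algebra_simps power2_eq_square)
  then show ?case by blast
qed

lemma pow_1Y': "\<exists>W. (1 + Y) ^ j = 1 + Y * (W :: complex fps)"
proof -
  obtain Z where Z: "(1 + Y) ^ j = 1 + of_nat j * Y + Y ^ 2 * (Z :: complex fps)" using pow_1Y by blast
  have "(1 + Y) ^ j = 1 + Y * (of_nat j + Y * Z)" by (simp add: Z algebra_simps power2_eq_square)
  then show ?thesis by blast
qed

definition Tf :: "nat \<Rightarrow> complex \<Rightarrow> complex fps" where
  "Tf k a = fps_X ^ k + fps_const a * fps_X ^ (2 * k - 1)"

lemma step_key:
  fixes H :: "complex fps"
  assumes k3: "3 \<le> k" and dk: "k + 1 \<le> d" and d2: "d \<noteq> 2 * k - 1" and E: "eqm d H (Tf k a)"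
  shows "\<exists>P. fps_nth P 0 = 0 \<and> fps_nth P 1 \<noteq> 0 \<and> eqm (Suc d) (H oo P) (fps_deriv P * Tf k a)"
proof -
  define m where "m = d - k - 1"
  have dm: "d = k + Suc m" using dk by (simp add: m_def)
  have mk: "Suc (Suc m) \<noteq> k" using d2 dm by auto
  obtain Q where HQ: "H = Tf k a + fps_X ^ d * Q" using E by (auto simp: eqm_iff)
  define e where "e = fps_nth Q 0"
  define Q1 where "Q1 = fps_shift 1 (Q - fps_const e)"
  have Q: "Q = fps_const e + fps_X * Q1"
    using X_factor[of "Q - fps_const e"] by (simp add: Q1_def e_def algebra_simps)
  define c where "c = e / (of_nat (Suc (Suc m)) - of_nat k)"
  have den: "(of_nat (Suc (Suc m)) - of_nat k :: complex) \<noteq> 0"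
    using mk by (metis eq_iff_diff_eq_0 of_nat_eq_iff)
  have ck: "of_nat k * c + e = c * of_nat (Suc (Suc m))"
    using den by (simp add: c_def field_simps)
  define Y where "Y = fps_const c * fps_X ^ Suc m"
  define P where "P = fps_X * (1 + Y)"
  have P0: "fps_nth P 0 = 0" by (simp add: P_def)
  have P1: "fps_nth P 1 = 1" by (simp add: P_def Y_def)
  have Pj: "P ^ j = fps_X ^ j * (1 + Y) ^ j" for j by (simp add: P_def power_mult_distrib)
  have c1: "eqm (Suc d) (P ^ k) (fps_X ^ k + fps_const (of_nat k * c) * fps_X ^ d)"
  proof -
    obtain Z where Z: "(1 + Y) ^ k = 1 + of_nat k * Y + Y ^ 2 * Z" using pow_1Y by blast
    have "P ^ k = (fps_X ^ k + fps_const (of_nat k * c) * fps_X ^ d) + fps_X ^ Suc d * (fps_X ^ m * fps_const (c^2) * Z)"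
      unfolding Pj Z unfolding dm Y_def
      by (simp add: algebra_simps power_add power_mult_distrib power2_eq_square fps_of_nat[symmetric] flip: fps_const_mult)
    then show ?thesis by (rule eqmI)
  qed
  have c2: "eqm (Suc d) (P ^ j) (fps_X ^ j)" if "d \<le> j + m" for j
  proof -
    obtain W where W: "(1 + Y) ^ j = 1 + Y * W" using pow_1Y' by blast
    have "P ^ j = fps_X ^ j + fps_X ^ (j + Suc m) * (fps_const c * W)"
      unfolding Pj W unfolding Y_def by (simp add: algebra_simps power_add)
    moreover have "eqm (Suc d) (fps_X ^ (j + Suc m) * (fps_const c * W)) 0"
      using that by (intro eqm_Xpow_zero) simp
    ultimately show ?thesis using eqm_add[OF eqm_refl[of _ "fps_X ^ j"]] by fastforce
  qed
  have c4: "eqm (Suc d) (P ^ Suc d * R) 0" for R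
    unfolding Pj mult.assoc by (rule eqm_Xpow_zero) simp
  have dP: "fps_deriv P = 1 + fps_const (c * of_nat (Suc (Suc m))) * fps_X ^ Suc m"
  proof -
    have "P = fps_X + fps_const c * fps_X ^ Suc (Suc m)" by (simp add: P_def Y_def algebra_simps)
    then show ?thesis by (simp only: fps_deriv_add deriv_monom fps_deriv_fps_X)
  qed
  have c5: "eqm (Suc d) (fps_deriv P * Tf k a) (Tf k a + fps_const (c * of_nat (Suc (Suc m))) * fps_X ^ d)"
  proof -
    have "fps_deriv P * Tf k a = (Tf k a + fps_const (c * of_nat (Suc (Suc m))) * fps_X ^ d)
       + fps_X ^ (2 * k - 1 + Suc m) * fps_const (c * of_nat (Suc (Suc m)) * a)"
      unfolding dP Tf_def dm by (simp add: algebra_simps power_add)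
    moreover have "eqm (Suc d) (fps_X ^ (2 * k - 1 + Suc m) * fps_const (c * of_nat (Suc (Suc m)) * a)) 0"
      using k3 dm by (intro eqm_Xpow_zero) simp
    ultimately show ?thesis using eqm_add[OF eqm_refl] by fastforce
  qed
  have comp: "H oo P = P ^ k + fps_const a * P ^ (2 * k - 1) + fps_const e * P ^ d + P ^ Suc d * (Q1 oo P)"
    unfolding HQ Q Tf_def
    by (simp add: fps_compose_add_distrib fps_compose_mult_distrib[OF P0] fps_X_power_compose[OF P0]
         fps_X_fps_compose_startby0[OF P0] algebra_simps)
  have "eqm (Suc d) (H oo P) ((fps_X ^ k + fps_const (of_nat k * c) * fps_X ^ d) + fps_const a * fps_X ^ (2 * k - 1)
      + fps_const e * fps_X ^ d + 0)"
    unfolding comp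
    by (intro eqm_add eqm_mult c1 c2 c4 eqm_refl) (use dm k3 in auto)
  moreover have "(fps_X ^ k + fps_const (of_nat k * c) * fps_X ^ d) + fps_const a * fps_X ^ (2 * k - 1)
      + fps_const e * fps_X ^ d + 0 = Tf k a + fps_const (c * of_nat (Suc (Suc m))) * fps_X ^ d"
  proof -
    have "fps_const (of_nat k * c) * fps_X ^ d + fps_const e * fps_X ^ d = fps_const (of_nat k * c + e) * (fps_X ^ d :: complex fps)"
      by (simp only: distrib_right fps_const_add[symmetric])
    then show ?thesis unfolding Tf_def ck by (simp add: algebra_simps)
  qed
  ultimately have "eqm (Suc d) (H oo P) (fps_deriv P * Tf k a)"
    using c5 eqm_sym eqm_trans by metis
  then show ?thesis using P0 P1 by auto
qed



definition coefs :: "complex fps \<Rightarrow> nat \<Rightarrow> complex" where "coefs H = (\<lambda>i. fps_nth H (i - 2))"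

lemma hser_coefs: "hser (coefs H) = H"
  by (intro fps_ext) (simp add: hser_def coefs_def)

lemma tp_iso_gen:
  assumes P0: "fps_nth P 0 = 0" and P1: "fps_nth P 1 \<noteq> 0"
  shows "tp_isomorphic n \<alpha> (coefs ((hser \<alpha> oo P) * inverse (fps_deriv P)))"
proof (rule tp_iso_P[OF P0 P1])
  have "fps_nth (fps_deriv P) 0 \<noteq> 0" using P1 by simp
  then have "fps_deriv P * inverse (fps_deriv P) = 1" by (rule inverse_mult_eq_1')
  then show "hser \<alpha> oo P = fps_deriv P * hser (coefs ((hser \<alpha> oo P) * inverse (fps_deriv P)))"
    unfolding hser_coefs by (simp add: algebra_simps)
qed

lemma tp_trans:
  assumes "tp_isomorphic n \<alpha> \<beta>" "tp_isomorphic n \<beta> \<gamma>"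
  shows "tp_isomorphic n \<alpha> \<gamma>"
proof -
  obtain f where f: "bij_betw f (vecs n) (vecs n)"
     "\<forall>x\<in>vecs n. \<forall>y\<in>vecs n. f (\<lambda>t. x t + y t) = (\<lambda>t. f x t + f y t)"
     "\<forall>c. \<forall>x\<in>vecs n. f (\<lambda>t. c * x t) = (\<lambda>t. c * f x t)"
     "\<forall>x\<in>vecs n. \<forall>y\<in>vecs n. f (mu0_mult n x y) = mu0_mult n (f x) (f y)"
     "\<forall>x\<in>vecs n. \<forall>y\<in>vecs n. f (tp_bracket n \<alpha> x y) = tp_bracket n \<beta> (f x) (f y)"
    using assms(1) unfolding tp_isomorphic_def by blast
  obtain g where g: "bij_betw g (vecs n) (vecs n)"
     "\<forall>x\<in>vecs n. \<forall>y\<in>vecs n. g (\<lambda>t. x t + y t) = (\<lambda>t. g x t + g y t)"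
     "\<forall>c. \<forall>x\<in>vecs n. g (\<lambda>t. c * x t) = (\<lambda>t. c * g x t)"
     "\<forall>x\<in>vecs n. \<forall>y\<in>vecs n. g (mu0_mult n x y) = mu0_mult n (g x) (g y)"
     "\<forall>x\<in>vecs n. \<forall>y\<in>vecs n. g (tp_bracket n \<beta> x y) = tp_bracket n \<gamma> (g x) (g y)"
    using assms(2) unfolding tp_isomorphic_def by blast
  have fv: "f x \<in> vecs n" if "x \<in> vecs n" for x using bij_betw_apply[OF f(1) that] .
  show ?thesis unfolding tp_isomorphic_def
  proof (intro exI[of _ "g \<circ> f"] conjI ballI allI)
    show "bij_betw (g \<circ> f) (vecs n) (vecs n)" using f(1) g(1) by (rule bij_betw_trans)
  next
    fix x y assume xy: "x \<in> vecs n" "y \<in> vecs n"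
    show "(g \<circ> f) (\<lambda>t. x t + y t) = (\<lambda>t. (g \<circ> f) x t + (g \<circ> f) y t)"
      using f(2) g(2) xy fv by simp
    show "(g \<circ> f) (mu0_mult n x y) = mu0_mult n ((g \<circ> f) x) ((g \<circ> f) y)"
      using f(4) g(4) xy fv by simp
    show "(g \<circ> f) (tp_bracket n \<alpha> x y) = tp_bracket n \<gamma> ((g \<circ> f) x) ((g \<circ> f) y)"
      using f(5) g(5) xy fv by simp
  next
    fix c x assume x: "x \<in> vecs n"
    show "(g \<circ> f) (\<lambda>t. c * x t) = (\<lambda>t. c * (g \<circ> f) x t)"
      using f(3) g(3) x fv by simp
  qed
qed

lemma tp_cong:
  assumes "tp_isomorphic n \<alpha> \<beta>" "\<forall>i\<in>{2..n}. \<beta> i = \<gamma> i"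
  shows "tp_isomorphic n \<alpha> \<gamma>"
proof -
  have "tp_const n \<beta> i j t = tp_const n \<gamma> i j t" for i j t
  proof (cases "3 \<le> i + j \<and> i + j \<le> n + 1 \<and> i + j - 1 \<le> t \<and> t \<le> n")
    case True
    then have "t + 3 - (i + j) \<in> {2..n}" by auto
    then show ?thesis using assms(2) by (simp add: tp_const_def)
  next
    case False then show ?thesis by (simp only: tp_const_def if_not_P[OF False] if_False)
  qed
  then have "tp_const n \<beta> = tp_const n \<gamma>" by (intro ext)
  then have "tp_bracket n \<beta> = tp_bracket n \<gamma>" by (simp add: tp_bracket_def[abs_def])
  then show ?thesis using assms(1) unfolding tp_isomorphic_def by simp
qed

lemma Tf_nth: "fps_nth (Tf k a) i = (if i = k then 1 else 0) + (if i = 2 * k - 1 then a else 0)"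
  by (simp add: Tf_def)

lemma step:
  assumes k3: "3 \<le> k" and dk: "k + 1 \<le> d" and E: "eqm d (hser \<beta>) (Tf k a)"
  shows "\<exists>\<beta>' a'. tp_isomorphic n \<beta> \<beta>' \<and> eqm (Suc d) (hser \<beta>') (Tf k a')"
proof (cases "d = 2 * k - 1")
  case True
  define a' where "a' = fps_nth (hser \<beta>) (2 * k - 1)"
  have "eqm (Suc d) (hser \<beta>) (Tf k a')"
    unfolding eqm_def
  proof (intro allI impI)
    fix i assume "i < Suc d"
    then consider "i < d" | "i = d" by linarith
    then show "fps_nth (hser \<beta>) i = fps_nth (Tf k a') i"
    proof cases
      case 1
      then show ?thesis using E True by (simp add: eqm_def Tf_nth)
    next
      case 2
      then show ?thesis using True k3 by (simp add: Tf_nth a'_def)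
    qed
  qed
  moreover have "tp_isomorphic n \<beta> \<beta>"
  proof -
    have "tp_isomorphic n \<beta> (\<lambda>i. \<beta> (Suc (Suc (i - 2))))"
      using tp_iso_gen[of fps_X n \<beta>] by (simp add: coefs_def hser_def)
    moreover have "\<forall>i\<in>{2..n}. \<beta> (Suc (Suc (i - 2))) = \<beta> i"
      by (auto simp: Suc_diff_Suc numeral_2_eq_2)
    ultimately show ?thesis by (rule tp_cong)
  qed
  ultimately show ?thesis by blast
next
  case False
  obtain P where P: "fps_nth P 0 = 0" "fps_nth P 1 \<noteq> 0"
      "eqm (Suc d) (hser \<beta> oo P) (fps_deriv P * Tf k a)"
    using step_key[OF k3 dk False E] by blast
  define \<beta>' where "\<beta>' = coefs ((hser \<beta> oo P) * inverse (fps_deriv P))"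
  have "fps_nth (fps_deriv P) 0 \<noteq> 0" using P(2) by simp
  then have inv: "fps_deriv P * inverse (fps_deriv P) = 1" by (rule inverse_mult_eq_1')
  have "eqm (Suc d) ((hser \<beta> oo P) * inverse (fps_deriv P)) ((fps_deriv P * Tf k a) * inverse (fps_deriv P))"
    by (rule eqm_mult[OF P(3) eqm_refl])
  also have "(fps_deriv P * Tf k a) * inverse (fps_deriv P) = Tf k a"
    using inv by (simp add: algebra_simps)
  finally have "eqm (Suc d) (hser \<beta>') (Tf k a)" by (simp add: \<beta>'_def hser_coefs)
  moreover have "tp_isomorphic n \<beta> \<beta>'" unfolding \<beta>'_def by (rule tp_iso_gen[OF P(1,2)])
  ultimately show ?thesis by blast
qed



lemma root_ex: assumes "0 < m" shows "\<exists>z::complex. z ^ m = w"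
proof -
  define z where "z = rcis (root m (cmod w)) (Arg w / real m)"
  have "z ^ m = rcis (root m (cmod w) ^ m) (real m * (Arg w / real m))"
    unfolding z_def by (rule DeMoivre2)
  also have "\<dots> = rcis (cmod w) (Arg w)" using assms by simp
  also have "\<dots> = w" by (rule rcis_cmod_Arg)
  finally show ?thesis by blast
qed

lemma base:
  assumes k3: "3 \<le> k" and Z: "\<forall>i<k. fps_nth (hser \<alpha>) i = 0" and nz: "fps_nth (hser \<alpha>) k \<noteq> 0"
  shows "\<exists>\<beta>. tp_isomorphic n \<alpha> \<beta> \<and> eqm (Suc k) (hser \<beta>) (Tf k 0)"
proof -
  obtain l where l: "l ^ (k - 1) = inverse (fps_nth (hser \<alpha>) k)"
    using root_ex[of "k - 1"] k3 by auto
  obtain k' where kk: "k = Suc k'" using k3 by (cases k) auto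
  have l0: "l \<noteq> 0"
  proof
    assume "l = 0"
    then have "l ^ (k - 1) = 0" using k3 by simp
    with l have "inverse (fps_nth (hser \<alpha>) k) = 0" by simp
    with nz show False by simp
  qed
  define P where "P = fps_const l * fps_X"
  have P0: "fps_nth P 0 = 0" and P1: "fps_nth P 1 \<noteq> 0" using l0 by (simp_all add: P_def)
  have dP: "fps_deriv P = fps_const l" by (simp add: P_def)
  define \<beta> where "\<beta> = coefs ((hser \<alpha> oo P) * inverse (fps_deriv P))"
  have iso: "tp_isomorphic n \<alpha> \<beta>" unfolding \<beta>_def by (rule tp_iso_gen[OF P0 P1])
  have nth: "fps_nth (hser \<beta>) i = l ^ i * fps_nth (hser \<alpha>) i * inverse l" for i
    by (simp add: \<beta>_def hser_coefs dP fps_const_inverse P_def)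
  have "eqm (Suc k) (hser \<beta>) (Tf k 0)"
    unfolding eqm_def
  proof (intro allI impI)
    fix i assume "i < Suc k"
    then consider "i < k" | "i = k" by linarith
    then show "fps_nth (hser \<beta>) i = fps_nth (Tf k 0) i"
    proof cases
      case 1 then show ?thesis using Z k3 by (simp add: nth Tf_nth)
    next
      case 2
      have "l ^ k = l ^ (k - 1) * l" unfolding kk by simp
      then have "l ^ k * fps_nth (hser \<alpha>) k * inverse l = 1" using l l0 nz by (simp add: field_simps)
      then show ?thesis using 2 k3 by (simp add: nth Tf_nth)
    qed
  qed
  with iso show ?thesis by blast
qed

lemma iter:
  assumes k3: "3 \<le> k" and b: "tp_isomorphic n \<alpha> \<beta>0" "eqm (Suc k) (hser \<beta>0) (Tf k a0)"
    and d: "k + 1 \<le> d"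
  shows "\<exists>\<beta> a. tp_isomorphic n \<alpha> \<beta> \<and> eqm d (hser \<beta>) (Tf k a)"
  using d
proof (induction d rule: nat_induct_at_least)
  case base then show ?case using b by auto
next
  case (Suc d)
  then obtain \<beta> a where ba: "tp_isomorphic n \<alpha> \<beta>" "eqm d (hser \<beta>) (Tf k a)" by blast
  obtain \<beta>' a' where "tp_isomorphic n \<beta> \<beta>'" "eqm (Suc d) (hser \<beta>') (Tf k a')"
    using step[OF k3 Suc.hyps(1) ba(2)] by blast
  then show ?case using tp_trans[OF ba(1)] by blast
qed

theorem mainTheorem10:
  fixes n s :: nat and \<alpha> :: "nat \<Rightarrow> complex"
  assumes "n \<ge> 5" and "5 \<le> s" and "s \<le> n"
    and "\<forall>i. 2 \<le> i \<and> i < s \<longrightarrow> \<alpha> i = 0"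
    and "\<alpha> s \<noteq> 0"
  shows "\<exists>a :: complex. tp_isomorphic n \<alpha>
           (\<lambda>i. if i = s then 1 else if i = 2 * s - 3 \<and> 2 * s - 3 \<le> n then a else 0)"
proof -
  define k where "k = s - 2"
  have k3: "3 \<le> k" using assms(2) by (simp add: k_def)
  have Z: "\<forall>i<k. fps_nth (hser \<alpha>) i = 0" using assms(4) by (auto simp: hser_def k_def)
  have ks: "k + 2 = s" using assms(2) by (simp add: k_def)
  have nz: "fps_nth (hser \<alpha>) k \<noteq> 0" unfolding hser_def fps_nth_Abs_fps ks using assms(5) .
  obtain \<beta>0 where b0: "tp_isomorphic n \<alpha> \<beta>0" "eqm (Suc k) (hser \<beta>0) (Tf k 0)"
    using base[OF k3 Z nz] by blast
  obtain \<beta> a where ba: "tp_isomorphic n \<alpha> \<beta>" "eqm (n - 1) (hser \<beta>) (Tf k a)"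
  proof -
    have "k + 1 \<le> n - 1" using assms(3) k3 unfolding k_def by linarith
    from iter[OF k3 b0 this] show ?thesis using that by blast
  qed
  have "\<forall>i\<in>{2..n}. \<beta> i = (if i = s then 1 else if i = 2 * s - 3 \<and> 2 * s - 3 \<le> n then a else 0)"
  proof
    fix i assume i: "i \<in> {2..n}"
    have "\<beta> i = fps_nth (hser \<beta>) (i - 2)" using i by (simp add: hser_def Suc_diff_Suc numeral_2_eq_2)
    also have "\<dots> = fps_nth (Tf k a) (i - 2)" 
    proof -
      have "i - 2 < n - 1" using i assms(1) by auto
      then show ?thesis using ba(2) unfolding eqm_def by blast
    qed
    also have "\<dots> = (if i = s then 1 else if i = 2 * s - 3 \<and> 2 * s - 3 \<le> n then a else 0)"
      using i k3 assms(2) by (auto simp: Tf_nth k_def; arith)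
    finally show "\<beta> i = (if i = s then 1 else if i = 2 * s - 3 \<and> 2 * s - 3 \<le> n then a else 0)" .
  qed
  then have "tp_isomorphic n \<alpha> (\<lambda>i. if i = s then 1 else if i = 2 * s - 3 \<and> 2 * s - 3 \<le> n then a else 0)"
    by (rule tp_cong[OF ba(1)])
  then show ?thesis by blast
qed


end
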